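(* Fix $0<p<1$, $q=1-p$, and integers $L<U$ with $U-L\ge 4$. With the notation of the context, for every integer $k\ge 2$ the functions $m_k(x)=\mathbb{E}\tau^x_k$ ($x$ an integer in $[L,U]$) satisfy $$m_k(x)=\begin{cases}0,&x=U,\\ 1+q\,m_{k-1}(x-1),&x=U-1,\\ 1+p+pq\,m_{k-2}(x)+q\,m_{k-1}(x-1),&x=U-2,\\ 1+pq\,m_{k-2}(x)+p\,m_{k-1}(x+2)-pq\,m_{k-2}(x+1)+q\,m_{k-1}(x-1),&L+1\le x\le U-3,\\ 0,&x=L,\end{cases}$$ and the family $(m_k)$ is the unique solution of this system of linear difference equations.
   Context: Let $\xi_1,\xi_2,\dots$ be i.i.d. random variables with values in $\{1,-1\}$, $\mathbb{P}(\xi_i=1)=p$, $\mathbb{P}(\xi_i=-1)=q:=1-p$. Define $X_k=-1$ if $\xi_k=-1$; $X_k=2$ if $\xi_k=\xi_{k-1}=1$ (for $k\ge 2$); and $X_k=1$ otherwise (in particular $X_1=1$ when $\xi_1=1$). Let $S_0=0$, $S_k=X_1+\dots+X_k$, and $S^x_k=x+S_k$. For $k\ge 0$ let $\tau^x_k=\min\{l\in\{0,\dots,k\}: S^x_l\le L \text{ or } S^x_l\ge U\}$ if this set is nonempty, and $\tau^x_k=k$ otherwise. *)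

theory Defs
  imports "HOL-Probability.Probability"
begin

definition walk_X :: "(nat \<Rightarrow> 'a \<Rightarrow> int) \<Rightarrow> nat \<Rightarrow> 'a \<Rightarrow> int" where
  "walk_X xi k \<omega> =
     (if xi k \<omega> = -1 then -1
      else if k \<ge> 2 \<and> xi k \<omega> = 1 \<and> xi (k - 1) \<omega> = 1 then 2
      else 1)"

definition walk_S :: "(nat \<Rightarrow> 'a \<Rightarrow> int) \<Rightarrow> nat \<Rightarrow> 'a \<Rightarrow> int" where
  "walk_S xi k \<omega> = (\<Sum>i\<in>{1..k}. walk_X xi i \<omega>)"

definition walk_tau :: "int \<Rightarrow> int \<Rightarrow> (nat \<Rightarrow> 'a \<Rightarrow> int) \<Rightarrow> int \<Rightarrow> nat \<Rightarrow> 'a \<Rightarrow> nat" where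
  "walk_tau L U xi x k \<omega> =
     (if \<exists>l\<le>k. x + walk_S xi l \<omega> \<le> L \<or> x + walk_S xi l \<omega> \<ge> U
      then (LEAST l. l \<le> k \<and> (x + walk_S xi l \<omega> \<le> L \<or> x + walk_S xi l \<omega> \<ge> U))
      else k)"

definition solves_system :: "real \<Rightarrow> real \<Rightarrow> int \<Rightarrow> int \<Rightarrow> (nat \<Rightarrow> int \<Rightarrow> real) \<Rightarrow> bool" where
  "solves_system p q L U f \<longleftrightarrow>
     (\<forall>k\<ge>2. \<forall>x\<in>{L..U}. f k x =
        (if x = U then 0
         else if x = U - 1 then 1 + q * f (k - 1) (x - 1)
         else if x = U - 2 then 1 + p + p * q * f (k - 2) x + q * f (k - 1) (x - 1)
         else if x = L then 0
         else 1 + p * q * f (k - 2) x + p * f (k - 1) (x + 2)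
                - p * q * f (k - 2) (x + 1) + q * f (k - 1) (x - 1)))"

end

theory Submission imports Defs begin
definition inc :: "bool \<Rightarrow> bool \<Rightarrow> int" where
  "inc prev b = (if b then (if prev then 2 else 1) else -1)"

fun tauG :: "int \<Rightarrow> int \<Rightarrow> bool \<Rightarrow> int \<Rightarrow> bool list \<Rightarrow> nat" where
  "tauG L U prev x [] = 0"
| "tauG L U prev x (b # bs) = (if x \<le> L \<or> x \<ge> U then 0 else Suc (tauG L U b (x + inc prev b) bs))"

fun Ef :: "real \<Rightarrow> real \<Rightarrow> int \<Rightarrow> int \<Rightarrow> bool \<Rightarrow> int \<Rightarrow> nat \<Rightarrow> real" where
  "Ef p q L U prev x 0 = 0"
| "Ef p q L U prev x (Suc n) = (if x \<le> L \<or> x \<ge> U then 0 else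
      1 + p * Ef p q L U True (x + inc prev True) n + q * Ef p q L U False (x - 1) n)"

definition wt :: "real \<Rightarrow> real \<Rightarrow> bool \<Rightarrow> real" where
  "wt p q b = (if b then p else q)"

lemma finite_len: "finite {bs::bool list. length bs = n}"
  using finite_lists_length_eq[of "UNIV::bool set" n] by simp

lemma sum_len_Suc:
  "(\<Sum>bs\<in>{bs::bool list. length bs = Suc n}. f bs) =
   (\<Sum>bs\<in>{bs. length bs = n}. f (True # bs)) + (\<Sum>bs\<in>{bs. length bs = n}. f (False # bs))"
proof -
  have eq: "{bs::bool list. length bs = Suc n} = Cons True ` {bs. length bs = n} \<union> Cons False ` {bs. length bs = n}"
    by (auto simp: length_Suc_conv image_iff)
  show ?thesis
    unfolding eq
    by (subst sum.union_disjoint) (auto simp: finite_len sum.reindex)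
qed

lemma sum_wt: "p + q = 1 \<Longrightarrow> (\<Sum>bs\<in>{bs::bool list. length bs = n}. prod_list (map (wt p q) bs)) = 1"
proof (induction n)
  case 0
  then show ?case by simp
next
  case (Suc n)
  then show ?case by (simp add: sum_len_Suc wt_def sum_distrib_left[symmetric] distrib_right[symmetric])
qed

lemma sum_tau: "p + q = 1 \<Longrightarrow>
  (\<Sum>bs\<in>{bs::bool list. length bs = n}. real (tauG L U prev x bs) * prod_list (map (wt p q) bs))
    = Ef p q L U prev x n"
proof (induction n arbitrary: prev x)
  case 0
  then show ?case by simp
next
  case (Suc n)
  show ?case
  proof (cases "x \<le> L \<or> x \<ge> U")
    case True
    then show ?thesis by (simp add: sum_len_Suc)
  next
    case False
    have "(\<Sum>bs\<in>{bs::bool list. length bs = Suc n}. real (tauG L U prev x bs) * prod_list (map (wt p q) bs))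
      = p * (\<Sum>bs\<in>{bs::bool list. length bs = n}. prod_list (map (wt p q) bs))
        + p * (\<Sum>bs\<in>{bs::bool list. length bs = n}. real (tauG L U True (x + inc prev True) bs) * prod_list (map (wt p q) bs))
        + q * (\<Sum>bs\<in>{bs::bool list. length bs = n}. prod_list (map (wt p q) bs))
        + q * (\<Sum>bs\<in>{bs::bool list. length bs = n}. real (tauG L U False (x + inc prev False) bs) * prod_list (map (wt p q) bs))"
      using False by (simp add: sum_len_Suc wt_def sum_distrib_left sum.distrib algebra_simps)
    also have "\<dots> = Ef p q L U prev x (Suc n)"
      using False Suc by (simp add: sum_wt inc_def algebra_simps)
    finally show ?thesis .
  qed
qed

definition H :: "int \<Rightarrow> int \<Rightarrow> (nat \<Rightarrow> int) \<Rightarrow> int \<Rightarrow> nat \<Rightarrow> nat" where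
  "H L U d x k = (if \<exists>l\<le>k. x + (\<Sum>j<l. d j) \<le> L \<or> x + (\<Sum>j<l. d j) \<ge> U
      then (LEAST l. l \<le> k \<and> (x + (\<Sum>j<l. d j) \<le> L \<or> x + (\<Sum>j<l. d j) \<ge> U)) else k)"

lemma H_Suc: "H L U d x (Suc k) = (if x \<le> L \<or> x \<ge> U then 0 else Suc (H L U (\<lambda>j. d (Suc j)) (x + d 0) k))"
proof (cases "x \<le> L \<or> x \<ge> U")
  case True
  then show ?thesis unfolding H_def
    by (auto intro!: Least_equality)
next
  case False
  have S: "\<And>l. (\<Sum>j<Suc l. d j) = d 0 + (\<Sum>j<l. d (Suc j))"
    by (simp only: sum.lessThan_Suc_shift)
  define P where "P = (\<lambda>l. l \<le> Suc k \<and> (x + (\<Sum>j<l. d j) \<le> L \<or> x + (\<Sum>j<l. d j) \<ge> U))"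
  define Q where "Q = (\<lambda>l. l \<le> k \<and> (x + d 0 + (\<Sum>j<l. d (Suc j)) \<le> L \<or> x + d 0 + (\<Sum>j<l. d (Suc j)) \<ge> U))"
  have P0: "\<not> P 0" using False by (simp add: P_def)
  have PQ: "\<And>l. P (Suc l) = Q l" unfolding P_def Q_def S by (simp add: add.assoc)
  have ex: "(\<exists>l. P l) = (\<exists>l. Q l)"
    using P0 PQ by (metis not0_implies_Suc)
  have exP: "(\<exists>l\<le>Suc k. x + (\<Sum>j<l. d j) \<le> L \<or> x + (\<Sum>j<l. d j) \<ge> U) = (\<exists>l. P l)"
    by (auto simp: P_def)
  have exQ: "(\<exists>l\<le>k. x + d 0 + (\<Sum>j<l. d (Suc j)) \<le> L \<or> x + d 0 + (\<Sum>j<l. d (Suc j)) \<ge> U) = (\<exists>l. Q l)"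
    by (auto simp: Q_def)
  show ?thesis
  proof (cases "\<exists>l. Q l")
    case True
    then obtain l where "Q l" by blast
    then have "P (Suc l)" using PQ by simp
    then have "Least P = Suc (Least Q)" using Least_Suc2[of P "Suc l" Q l] P0 PQ \<open>Q l\<close> by blast
    then show ?thesis using False True ex exP exQ unfolding H_def P_def[symmetric] Q_def[symmetric]
      by simp
  next
    case nQ: False
    then show ?thesis using False ex exP exQ unfolding H_def P_def[symmetric] Q_def[symmetric]
      by auto
  qed
qed

definition incr :: "bool \<Rightarrow> bool list \<Rightarrow> nat \<Rightarrow> int" where
  "incr prev bs j = inc (if j = 0 then prev else bs ! (j - 1)) (bs ! j)"

lemma H_tauG: "length bs = k \<Longrightarrow> (\<forall>j<k. d j = incr prev bs j) \<Longrightarrow> H L U d x k = tauG L U prev x bs"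
proof (induction bs arbitrary: prev x d k)
  case Nil
  then show ?case by (simp add: H_def)
next
  case (Cons b bs)
  then obtain n where k: "k = Suc n" and n: "length bs = n" by auto
  have d0: "d 0 = inc prev b" using Cons.prems by (simp add: k incr_def)
  have ds: "\<forall>j<n. d (Suc j) = incr b bs j" using Cons.prems by (auto simp: k incr_def)
  show ?case unfolding k H_Suc using Cons.IH[OF n ds] d0 by simp
qed

lemma Ef_out: "x \<le> L \<or> x \<ge> U \<Longrightarrow> Ef p q L U prev x n = 0"
  by (cases n) auto

lemma Ef_rec:
  assumes "U - L \<ge> 4" "x \<in> {L..U}"
  shows "Ef p q L U False x (Suc (Suc n)) =
        (if x = U then 0
         else if x = U - 1 then 1 + q * Ef p q L U False (x - 1) (Suc n)
         else if x = U - 2 then 1 + p + p * q * Ef p q L U False x n + q * Ef p q L U False (x - 1) (Suc n)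
         else if x = L then 0
         else 1 + p * q * Ef p q L U False x n + p * Ef p q L U False (x + 2) (Suc n)
                - p * q * Ef p q L U False (x + 1) n + q * Ef p q L U False (x - 1) (Suc n))"
proof -
  consider "x = U" | "x = U - 1" | "x = U - 2" | "x = L" | "L < x" "x < U - 2"
    using assms by force
  then show ?thesis
  proof cases
    case 1 then show ?thesis by simp
  next
    case 2 then show ?thesis using assms by (simp add: inc_def del: Ef.simps(2)) (simp add: inc_def)
  next
    case 3 then show ?thesis using assms by (simp add: inc_def algebra_simps Ef_out)
  next
    case 4 then show ?thesis using assms by simp
  next
    case 5
    have e1: "x + 1 + 2 = x + 2 + 1" by simp
    show ?thesis using 5 assms by (simp add: inc_def algebra_simps e1)
  qed
qed

lemma sum_shift1: "(\<Sum>i\<in>{1..l}. f i) = (\<Sum>j<l. f (Suc j) :: 'b::comm_monoid_add)"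
  by (induction l) (auto simp: atLeastAtMostSuc_conv add.commute)

lemma prod_shift1: "(\<Prod>i\<in>{1..l}. f i) = (\<Prod>j<l. f (Suc j) :: 'b::comm_monoid_mult)"
  by (induction l) (auto simp: atLeastAtMostSuc_conv mult.commute)

lemma prod_list_nth: "prod_list (map f xs) = (\<Prod>j<length xs. f (xs ! j) :: 'b::comm_monoid_mult)"
  proof (induction xs)
  case (Cons a xs)
  have "(\<Prod>j<length (a#xs). f ((a#xs)!j)) = f a * (\<Prod>j<length xs. f (xs!j))"
    by (simp only: length_Cons prod.lessThan_Suc_shift nth_Cons_0 nth_Cons_Suc)
  then show ?case by (simp add: Cons.IH)
qed simp

lemma expect_tau:
  assumes ps: "prob_space M" and p: "0 < p" "p < 1" "q = 1 - p"
    and ind: "prob_space.indep_vars M (\<lambda>_. count_space UNIV) xi {1..}"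
    and pm: "\<forall>i\<ge>1. \<forall>\<omega>\<in>space M. xi i \<omega> = 1 \<or> xi i \<omega> = -1"
    and pr: "\<forall>i\<ge>1. measure M {\<omega>\<in>space M. xi i \<omega> = 1} = p"
  shows "integral\<^sup>L M (\<lambda>\<omega>. real (walk_tau L U xi x k \<omega>)) = Ef p q L U False x k"
proof -
  interpret prob_space M by (rule ps)
  define V where "V = (\<lambda>\<omega>. map (\<lambda>j. xi (Suc j) \<omega> = 1) [0..<k])"
  have lenV: "length (V \<omega>) = k" for \<omega> by (simp add: V_def)
  have tau_eq: "walk_tau L U xi x k \<omega> = tauG L U False x (V \<omega>)" if w: "\<omega> \<in> space M" for \<omega>
  proof -
    have S: "walk_S xi l \<omega> = (\<Sum>j<l. walk_X xi (Suc j) \<omega>)" for l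
      unfolding walk_S_def by (rule sum_shift1)
    have "walk_tau L U xi x k \<omega> = H L U (\<lambda>j. walk_X xi (Suc j) \<omega>) x k"
      unfolding walk_tau_def H_def S ..
    also have "\<dots> = tauG L U False x (V \<omega>)"
    proof (rule H_tauG[OF lenV], intro allI impI)
      fix j assume j: "j < k"
      have a: "xi (Suc j) \<omega> = 1 \<or> xi (Suc j) \<omega> = -1" using pm w by auto
      have b: "j \<ge> 1 \<Longrightarrow> xi j \<omega> = 1 \<or> xi j \<omega> = -1" using pm w by auto
      show "walk_X xi (Suc j) \<omega> = incr False (V \<omega>) j"
        using a b j unfolding walk_X_def incr_def inc_def V_def
        by (cases j) auto
    qed
    finally show ?thesis .
  qed
  have meas: "xi i \<in> measurable M (count_space UNIV)" if "i \<ge> 1" for i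
    using ind that unfolding indep_vars_def by auto
  define E where "E = (\<lambda>bs. {\<omega>\<in>space M. V \<omega> = bs})"
  define B where "B = {bs::bool list. length bs = k}"
  have E_eq: "E bs = {\<omega>\<in>space M. \<forall>j\<in>{..<k}. (xi (Suc j) \<omega> = 1) = bs ! j}" if "bs \<in> B" for bs
    using that unfolding E_def B_def V_def by (auto simp: list_eq_iff_nth_eq)
  have E_sets: "E bs \<in> sets M" if "bs \<in> B" for bs
  proof -
    have "{\<omega>\<in>space M. (xi (Suc j) \<omega> = 1) = bs ! j} \<in> sets M" for j
    proof -
      have "{\<omega>\<in>space M. (xi (Suc j) \<omega> = 1) = bs ! j} = xi (Suc j) -` {y. (y = 1) = bs ! j} \<inter> space M"
        by auto
      also have "\<dots> \<in> sets M" by (rule measurable_sets[OF meas]) auto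
      finally show ?thesis .
    qed
    then show ?thesis unfolding E_eq[OF that] by (intro sets.sets_Collect_finite_All) auto
  qed
  have probE: "prob (E bs) = prod_list (map (wt p q) bs)" if bsB: "bs \<in> B" for bs
  proof (cases "k = 0")
    case True
    then have "E bs = space M" using bsB by (simp add: E_def B_def V_def)
    then show ?thesis using True bsB by (simp add: prob_space B_def)
  next
    case False
    define c where "c = (\<lambda>j. if bs ! (j - 1) then (1::int) else -1)"
    define A where "A = (\<lambda>j. {\<omega>\<in>space M. xi j \<omega> = c j})"
    have "indep_events (\<lambda>j. {\<omega>\<in>space M. xi j \<omega> = c j}) {1..}"
      by (rule indep_eventsI_indep_vars[OF ind]) auto
    then have indA: "indep_events A {1..}" unfolding A_def .
    have EA: "E bs = (\<Inter>j\<in>{1..k}. A j)"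
    proof -
      have "E bs = {\<omega>\<in>space M. \<forall>j\<in>{1..k}. xi j \<omega> = c j}"
      proof -
        have "(\<forall>j\<in>{..<k}. (xi (Suc j) \<omega> = 1) = bs ! j) = (\<forall>j\<in>{1..k}. xi j \<omega> = c j)"
          if w: "\<omega> \<in> space M" for \<omega>
        proof -
          have "(\<forall>j\<in>{..<k}. (xi (Suc j) \<omega> = 1) = bs ! j) = (\<forall>j\<in>{..<k}. xi (Suc j) \<omega> = c (Suc j))"
          proof (intro ball_cong refl)
            fix j assume "j \<in> {..<k}"
            have "xi (Suc j) \<omega> = 1 \<or> xi (Suc j) \<omega> = -1" using pm w by auto
            then show "((xi (Suc j) \<omega> = 1) = bs ! j) = (xi (Suc j) \<omega> = c (Suc j))"
              unfolding c_def by auto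
          qed
          also have "\<dots> = (\<forall>j\<in>{1..k}. xi j \<omega> = c j)"
            by (auto simp: Ball_def) (metis Suc_le_eq Suc_pred' atLeastAtMost_iff less_Suc_eq_0_disj less_eq_Suc_le not_less_eq_eq)
          finally show ?thesis .
        qed
        then show ?thesis unfolding E_eq[OF bsB] by auto
      qed
      also have "\<dots> = (\<Inter>j\<in>{1..k}. A j)" using False by (auto simp: A_def) (meson Suc_leI atLeastAtMost_iff le_refl neq0_conv)
      finally show ?thesis .
    qed
    have "prob (\<Inter>j\<in>{1..k}. A j) = (\<Prod>j\<in>{1..k}. prob (A j))"
      using indA False unfolding indep_events_def by (auto)
    also have "\<dots> = (\<Prod>j\<in>{1..k}. wt p q (bs ! (j - 1)))"
    proof (intro prod.cong refl)
      fix j assume j: "j \<in> {1..k}"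
      show "prob (A j) = wt p q (bs ! (j - 1))"
      proof (cases "bs ! (j - 1)")
        case True
        then show ?thesis using pr j by (simp add: A_def c_def wt_def)
      next
        case F: False
        have "A j = space M - {\<omega>\<in>space M. xi j \<omega> = 1}"
          using pm j F by (auto simp: A_def c_def)
        moreover have "{\<omega>\<in>space M. xi j \<omega> = 1} \<in> events"
        proof -
          have "{\<omega>\<in>space M. xi j \<omega> = 1} = xi j -` {1} \<inter> space M" by auto
          also have "\<dots> \<in> sets M" using j by (intro measurable_sets[OF meas]) auto
          finally show ?thesis .
        qed
        ultimately show ?thesis using pr j F p by (simp add: prob_compl wt_def)
      qed
    qed
    also have "\<dots> = prod_list (map (wt p q) bs)"
      using bsB unfolding prod_shift1 prod_list_nth B_def by simp
    finally show ?thesis using EA by simp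
  qed
  have pt: "real (walk_tau L U xi x k \<omega>) = (\<Sum>bs\<in>B. real (tauG L U False x bs) * indicator (E bs) \<omega>)"
    if w: "\<omega> \<in> space M" for \<omega>
  proof -
    have "(\<Sum>bs\<in>B. real (tauG L U False x bs) * indicator (E bs) \<omega>)
        = (\<Sum>bs\<in>B. if bs = V \<omega> then real (tauG L U False x bs) else 0)"
      using w by (intro sum.cong refl) (auto simp: E_def indicator_def)
    also have "\<dots> = real (tauG L U False x (V \<omega>))"
      by (simp add: B_def lenV finite_len)
    finally show ?thesis using tau_eq[OF w] by simp
  qed
  have "integral\<^sup>L M (\<lambda>\<omega>. real (walk_tau L U xi x k \<omega>))
      = integral\<^sup>L M (\<lambda>\<omega>. \<Sum>bs\<in>B. real (tauG L U False x bs) * indicator (E bs) \<omega>)"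
    using pt by (intro Bochner_Integration.integral_cong) auto
  also have "\<dots> = (\<Sum>bs\<in>B. real (tauG L U False x bs) * prob (E bs))"
  proof (subst Bochner_Integration.integral_sum)
    show "integrable M (\<lambda>\<omega>. real (tauG L U False x bs) * indicator (E bs) \<omega>)" if "bs \<in> B" for bs
      using E_sets[OF that] by (intro integrable_mult_right integrable_real_indicator) (auto simp: emeasure_eq_measure)
    show "(\<Sum>bs\<in>B. integral\<^sup>L M (\<lambda>\<omega>. real (tauG L U False x bs) * indicator (E bs) \<omega>)) =
        (\<Sum>bs\<in>B. real (tauG L U False x bs) * prob (E bs))"
      using E_sets by (intro sum.cong refl) (simp add: Int_absorb2 sets.sets_into_space)
  qed
  also have "\<dots> = (\<Sum>bs\<in>B. real (tauG L U False x bs) * prod_list (map (wt p q) bs))"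
    using probE by simp
  also have "\<dots> = Ef p q L U False x k"
    unfolding B_def using p by (intro sum_tau) simp
  finally show ?thesis .
qed

theorem theorem3p1:
  fixes M :: "'a measure" and xi :: "nat \<Rightarrow> 'a \<Rightarrow> int"
    and p q :: real and L U :: int
    and m :: "nat \<Rightarrow> int \<Rightarrow> real"
  assumes "prob_space M"
    and "0 < p" and "p < 1" and "q = 1 - p"
    and "U - L \<ge> 4"
    and "prob_space.indep_vars M (\<lambda>_. count_space UNIV) xi {1..}"
    and "\<forall>i\<ge>1. \<forall>\<omega>\<in>space M. xi i \<omega> = 1 \<or> xi i \<omega> = -1"
    and "\<forall>i\<ge>1. measure M {\<omega>\<in>space M. xi i \<omega> = 1} = p"
    and "\<forall>k x. m k x = integral\<^sup>L M (\<lambda>\<omega>. real (walk_tau L U xi x k \<omega>))"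
  shows "solves_system p q L U m \<and>
         (\<forall>f. solves_system p q L U f \<and> (\<forall>x\<in>{L..U}. f 0 x = m 0 x \<and> f 1 x = m 1 x)
              \<longrightarrow> (\<forall>k. \<forall>x\<in>{L..U}. f k x = m k x))"
proof -
  have mE: "m k x = Ef p q L U False x k" for k x
    using expect_tau[OF assms(1,2,3,4,6,7,8)] assms(9) by simp
  have sol: "solves_system p q L U m"
    unfolding solves_system_def
  proof (intro allI impI ballI)
    fix k :: nat and x assume k: "2 \<le> k" and x: "x \<in> {L..U}"
    then obtain n where kn: "k = Suc (Suc n)" by (metis add_2_eq_Suc le_Suc_ex)
    show "m k x = (if x = U then 0
         else if x = U - 1 then 1 + q * m (k - 1) (x - 1)
         else if x = U - 2 then 1 + p + p * q * m (k - 2) x + q * m (k - 1) (x - 1)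
         else if x = L then 0
         else 1 + p * q * m (k - 2) x + p * m (k - 1) (x + 2)
                - p * q * m (k - 2) (x + 1) + q * m (k - 1) (x - 1))"
      unfolding mE kn using Ef_rec[OF assms(5) x, of p q n] by simp
  qed
  have uniq: "\<forall>k. \<forall>x\<in>{L..U}. f k x = m k x"
    if fs: "solves_system p q L U f" and base: "\<forall>x\<in>{L..U}. f 0 x = m 0 x \<and> f 1 x = m 1 x" for f
  proof
    fix k show "\<forall>x\<in>{L..U}. f k x = m k x"
    proof (induction k rule: less_induct)
      case (less k)
      show ?case
      proof
        fix x assume x: "x \<in> {L..U}"
        show "f k x = m k x"
        proof (cases "k < 2")
          case True
          then have "k = 0 \<or> k = 1" by auto
          then show ?thesis using base x by auto
        next
          case False
          have IH1: "\<And>y. y \<in> {L..U} \<Longrightarrow> f (k - 1) y = m (k - 1) y"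
            using less False by auto
          have IH2: "\<And>y. y \<in> {L..U} \<Longrightarrow> f (k - 2) y = m (k - 2) y"
            using less False by auto
          have ef: "f k x = (if x = U then 0
             else if x = U - 1 then 1 + q * f (k - 1) (x - 1)
             else if x = U - 2 then 1 + p + p * q * f (k - 2) x + q * f (k - 1) (x - 1)
             else if x = L then 0
             else 1 + p * q * f (k - 2) x + p * f (k - 1) (x + 2)
                    - p * q * f (k - 2) (x + 1) + q * f (k - 1) (x - 1))"
            using fs False x unfolding solves_system_def by auto
          have em: "m k x = (if x = U then 0
             else if x = U - 1 then 1 + q * m (k - 1) (x - 1)
             else if x = U - 2 then 1 + p + p * q * m (k - 2) x + q * m (k - 1) (x - 1)
             else if x = L then 0
             else 1 + p * q * m (k - 2) x + p * m (k - 1) (x + 2)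
                    - p * q * m (k - 2) (x + 1) + q * m (k - 1) (x - 1))"
            using sol False x unfolding solves_system_def by auto
          consider "x = U" | "x = U - 1" | "x = U - 2" | "x = L" | "L < x" "x < U - 2"
            using x assms(5) by force
          then show ?thesis
          proof cases
            case 1 then show ?thesis using ef em by simp
          next
            case 2 then show ?thesis using ef em IH1[of "x - 1"] assms(5) by simp
          next
            case 3 then show ?thesis using ef em IH1[of "x - 1"] IH2[of x] assms(5) by simp
          next
            case 4 then show ?thesis using ef em assms(5) by simp
          next
            case 5 then show ?thesis using ef em IH1[of "x - 1"] IH1[of "x + 2"] IH2[of x] IH2[of "x + 1"] assms(5)
              by simp
          qed
        qed
      qed
    qed
  qed
  show ?thesis using sol uniq by blast
qed

end
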